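(* Let $H>0$, $\beta\in(0,1/2)$, $a>0$, $b>0$, $\eta\in(0,1]$, $D_0>0$, $R_0\ge0$ be constants. If $\eta<1$ let $\delta\in(0,\eta)$ and $\eta^-=\eta-\delta$; if $\eta=1$ let $\eta^-=1$. Then there exist constants $A,B>0$ depending only on $H,\beta,a,b,\eta^-,D_0,R_0$ such that the following holds for every $T>0$. Suppose $x^T,v^T:[0,\infty)\to\mathbb{R}^3$ satisfy \[\dot x^T=v^T(t),\qquad \dot v^T=-a_T(x^T,t)\,v^T(t)+\varepsilon_T(t),\qquad t\ge0,\] where the scalar coefficient satisfies $a_T(x,t)\ge H/(1+|x|^2)^{\beta}$, the perturbation $\varepsilon_T(t)\in\mathbb{R}^3$ satisfies $|\varepsilon_T(t)|\le a\,e^{-b(t+T)^{\eta}}$ for all $t\ge0$, and $|v^T(t)|\le D_0$ for all $t\ge0$ and $|x^T(0)|\le R_0+D_0T$. Then \[|v^T(T)|\le A\,e^{-B\,T^{\min(1-2\beta,\ \eta^-)}}.\] *)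

theory Defs
  imports "HOL-Analysis.Analysis"
begin

end

theory Submission
  imports Defs
begin

lemma inner_deriv:
  fixes v :: "real \<Rightarrow> 'a::real_inner"
  assumes "(v has_vector_derivative w) (at t within S)"
  shows "((\<lambda>t. v t \<bullet> v t) has_field_derivative (2 * (v t \<bullet> w))) (at t within S)"
proof -
  have d: "(v has_derivative (\<lambda>h. h *\<^sub>R w)) (at t within S)"
    using assms by (simp add: has_vector_derivative_def)
  have "((\<lambda>t. v t \<bullet> v t) has_derivative (\<lambda>h. v t \<bullet> (h *\<^sub>R w) + (h *\<^sub>R w) \<bullet> v t)) (at t within S)"
    by (rule has_derivative_inner[OF d d])
  moreover have "(\<lambda>h. v t \<bullet> (h *\<^sub>R w) + (h *\<^sub>R w) \<bullet> v t) = (*) (2 * (v t \<bullet> w))"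
    by (rule ext) (simp add: inner_commute algebra_simps)
  ultimately show ?thesis by (simp add: has_field_derivative_def)
qed

lemma key:
  fixes v :: "real \<Rightarrow> 'a::real_inner" and al :: "real \<Rightarrow> real"
  assumes T: "T > 0" and lam: "lam \<ge> 0"
  and dv: "\<forall>t\<ge>0. (v has_vector_derivative (- al t *\<^sub>R v t + ep t)) (at t within {0..})"
  and alb: "\<forall>t\<in>{0..T}. al t \<ge> lam"
  and epb: "\<forall>t\<in>{0..T}. norm (ep t) \<le> E"
  and vb: "\<forall>t\<ge>0. norm (v t) \<le> D0"
  shows "(norm (v T))\<^sup>2 \<le> D0\<^sup>2 * exp(-2*lam*T) + 2*D0*E*T"
proof -
  define g where "g t = exp (2*lam*t) * (v t \<bullet> v t)" for t
  define g' where "g' t = exp (2*lam*t) * (2*lam * (v t \<bullet> v t)) + exp (2*lam*t) * (2 * (v t \<bullet> (- al t *\<^sub>R v t + ep t)))" for t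
  have "norm (v 0) \<le> D0" using vb by simp
  hence D0: "D0 \<ge> 0" using norm_ge_zero[of "v 0"] by linarith
  have "norm (ep 0) \<le> E" using epb T by simp
  hence E: "E \<ge> 0" using norm_ge_zero[of "ep 0"] by linarith
  have der: "(g has_derivative (\<lambda>h. h * g' t)) (at t within {0..T})" if "0 \<le> t" "t \<le> T" for t
  proof -
    have "(v has_vector_derivative (- al t *\<^sub>R v t + ep t)) (at t within {0..T})"
      using dv that by (auto intro: has_vector_derivative_within_subset)
    from inner_deriv[OF this]
    have "(g has_field_derivative g' t) (at t within {0..T})"
      unfolding g_def g'_def
      by (auto intro!: derivative_eq_intros)
    moreover have "(*) (g' t) = (\<lambda>h. h * g' t)" by (rule ext) (simp add: mult.commute)
    ultimately show ?thesis by (simp add: has_field_derivative_def)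
  qed
  have g'b: "g' t \<le> exp (2*lam*T) * (2*D0*E)" if "0 \<le> t" "t \<le> T" for t
  proof -
    have "v t \<bullet> (- al t *\<^sub>R v t + ep t) = - al t * (v t \<bullet> v t) + v t \<bullet> ep t"
      by (simp add: inner_add_right inner_diff_right)
    moreover have "v t \<bullet> ep t \<le> D0 * E"
    proof -
      have "v t \<bullet> ep t \<le> norm (v t) * norm (ep t)" by (rule Cauchy_Schwarz_ineq2[THEN abs_le_D1])
      also have "\<dots> \<le> D0 * E" using vb epb that D0 by (intro mult_mono) auto
      finally show ?thesis .
    qed
    moreover have "al t * (v t \<bullet> v t) \<ge> lam * (v t \<bullet> v t)"
      using alb that by (intro mult_right_mono) auto
    ultimately have "2*lam * (v t \<bullet> v t) + 2 * (v t \<bullet> (- al t *\<^sub>R v t + ep t)) \<le> 2*D0*E" by linarith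
    hence "g' t \<le> exp (2*lam*t) * (2*D0*E)" unfolding g'_def
      by (simp add: distrib_left[symmetric])
    also have "\<dots> \<le> exp (2*lam*T) * (2*D0*E)"
      using that lam D0 E by (intro mult_right_mono) (auto intro: mult_left_mono)
    finally show ?thesis .
  qed
  obtain z where z: "z \<in> {0..T}" "g T - g 0 = (T - 0) * g' z"
    using mvt_very_simple[of 0 T g "\<lambda>t h. h * g' t"] der T by auto
  have "g T \<le> g 0 + T * (exp (2*lam*T) * (2*D0*E))"
    proof -
    have "T * g' z \<le> T * (exp (2*lam*T) * (2*D0*E))"
      using z g'b[of z] T by (intro mult_left_mono) auto
    thus ?thesis using z by simp
  qed
  moreover have "g 0 \<le> D0\<^sup>2"
    using vb by (simp add: g_def power2_norm_eq_inner[symmetric] power_mono)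
  ultimately have "exp (2*lam*T) * (norm (v T))\<^sup>2 \<le> D0\<^sup>2 + T * (exp (2*lam*T) * (2*D0*E))"
    by (simp add: g_def power2_norm_eq_inner)
  hence "(norm (v T))\<^sup>2 \<le> (D0\<^sup>2 + T * (exp (2*lam*T) * (2*D0*E))) / exp (2*lam*T)"
    by (simp add: field_simps)
  also have "\<dots> = D0\<^sup>2 * exp(-2*lam*T) + 2*D0*E*T"
    by (simp add: field_simps exp_minus[symmetric] exp_add[symmetric])
  finally show ?thesis .
qed

lemma xbound:
  fixes x :: "real \<Rightarrow> 'a::real_normed_vector"
  assumes dx: "\<forall>t\<ge>0. (x has_vector_derivative v t) (at t within {0..})"
  and vb: "\<forall>t\<ge>0. norm (v t) \<le> D0" and t: "t \<ge> 0"
  shows "norm (x t) \<le> norm (x 0) + D0 * t"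
proof -
  have "norm (x t - x 0) \<le> D0 * norm (t - 0)"
  proof (rule differentiable_bound[where f' = "\<lambda>s h. h *\<^sub>R v s" and S = "{0..t}"])
    fix s assume s: "s \<in> {0..t}"
    show "(x has_derivative (\<lambda>h. h *\<^sub>R v s)) (at s within {0..t})"
      using dx s by (auto simp: has_vector_derivative_def intro: has_derivative_subset)
    show "onorm (\<lambda>h. h *\<^sub>R v s) \<le> D0"
      using onorm_scaleR_left[OF bounded_linear_ident, of "v s"] vb s by (simp add: onorm_id)
  qed (use t in auto)
  then show ?thesis using t norm_triangle_sub[of "x t" "x 0"] by simp
qed

lemma loglemma:
  fixes b \<eta> T :: real
  assumes "b > 0" "\<eta> > 0" "T > 0"
  shows "T \<le> exp ((b/2) * T powr \<eta> + (-1 - ln (b*\<eta>/2)) / \<eta>)"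
proof -
  define y where "y = (b*\<eta>/2) * T powr \<eta>"
  have y: "y > 0" using assms by (simp add: y_def)
  have "ln y = ln (b*\<eta>/2) + \<eta> * ln T"
    using assms unfolding y_def by (subst ln_mult) (auto simp: ln_powr)
  moreover have "ln y \<le> y - 1" using y by (rule ln_le_minus_one)
  moreover have "\<eta> * ((b/2) * T powr \<eta> + (-1 - ln (b*\<eta>/2)) / \<eta>) = y - 1 - ln (b*\<eta>/2)"
    using assms by (simp add: y_def field_simps)
  ultimately have "\<eta> * ln T \<le> \<eta> * ((b/2) * T powr \<eta> + (-1 - ln (b*\<eta>/2)) / \<eta>)"
    by linarith
  hence "ln T \<le> (b/2) * T powr \<eta> + (-1 - ln (b*\<eta>/2)) / \<eta>"
    using assms by (simp add: mult_le_cancel_left_pos)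
  thus ?thesis using assms by (metis exp_le_cancel_iff exp_ln)
qed


lemma lamlemma:
  fixes H \<beta> R0 D0 T :: real
  assumes "H > 0" "\<beta> > 0" "R0 \<ge> 0" "D0 > 0" "T \<ge> 1"
  shows "H / (1 + (R0 + 2*D0*T)\<^sup>2) powr \<beta> * T \<ge> H / ((1+R0+2*D0)\<^sup>2) powr \<beta> * T powr (1 - 2*\<beta>)"
proof -
  define K where "K = (1+R0+2*D0)\<^sup>2"
  have K: "K > 0" using assms by (simp add: K_def add_pos_nonneg)
  have "1 + (R0 + 2*D0*T)\<^sup>2 \<le> (1 + R0 + 2*D0*T)\<^sup>2"
    using assms by (simp add: power2_eq_square algebra_simps)
  also have "\<dots> \<le> ((1+R0+2*D0)*T)\<^sup>2"
  proof (intro power_mono)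
    have "(1 + R0) * 1 \<le> (1 + R0) * T" using assms by (intro mult_left_mono) auto
    thus "1 + R0 + 2*D0*T \<le> (1+R0+2*D0)*T" by (simp add: algebra_simps)
  qed (use assms in auto)
  also have "\<dots> = K * T\<^sup>2" by (simp add: K_def power_mult_distrib)
  finally have le: "1 + (R0 + 2*D0*T)\<^sup>2 \<le> K * T\<^sup>2" .
  have "(1 + (R0 + 2*D0*T)\<^sup>2) powr \<beta> \<le> (K * T\<^sup>2) powr \<beta>"
    using le assms by (intro powr_mono2) auto
  also have "\<dots> = K powr \<beta> * T powr (2*\<beta>)"
  proof -
    have "T\<^sup>2 = T powr 2" using assms by (simp add: powr_realpow)
    hence "(T\<^sup>2) powr \<beta> = T powr (2*\<beta>)" by (simp add: powr_powr)
    thus ?thesis using K assms by (simp add: powr_mult)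
  qed
  finally have le2: "(1 + (R0 + 2*D0*T)\<^sup>2) powr \<beta> \<le> K powr \<beta> * T powr (2*\<beta>)" .
  have "1 + (R0 + 2*D0*T)\<^sup>2 > 0" by (simp add: add_pos_nonneg)
  hence pos: "(1 + (R0 + 2*D0*T)\<^sup>2) powr \<beta> > 0" by simp
  have "H / (K powr \<beta> * T powr (2*\<beta>)) \<le> H / (1 + (R0 + 2*D0*T)\<^sup>2) powr \<beta>"
    using le2 pos assms K by (intro divide_left_mono) (auto intro!: mult_pos_pos)
  hence "H / (K powr \<beta> * T powr (2*\<beta>)) * T \<le> H / (1 + (R0 + 2*D0*T)\<^sup>2) powr \<beta> * T"
    using assms by (intro mult_right_mono) auto
  moreover have "H / (K powr \<beta> * T powr (2*\<beta>)) * T = H / K powr \<beta> * T powr (1 - 2*\<beta>)"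
    using assms K by (simp add: powr_diff)
  ultimately show ?thesis by (simp add: K_def)
qed

theorem lemma3:
  fixes H \<beta> a b \<eta> \<delta> D0 R0 :: real
  assumes "H > 0" and "0 < \<beta>" and "\<beta> < 1/2" and "a > 0" and "b > 0"
    and "0 < \<eta>" and "\<eta> \<le> 1" and "D0 > 0" and "R0 \<ge> 0"
    and "\<eta> < 1 \<Longrightarrow> 0 < \<delta> \<and> \<delta> < \<eta>"
  defines "\<eta>m \<equiv> (if \<eta> < 1 then \<eta> - \<delta> else 1)"
  shows "\<exists>A B. A > 0 \<and> B > 0 \<and>
    (\<forall>T::real. \<forall>(v::real \<Rightarrow> real^3) (x::real \<Rightarrow> real^3)
        (aT::real^3 \<Rightarrow> real \<Rightarrow> real) (\<epsilon>::real \<Rightarrow> real^3).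
      T > 0 \<longrightarrow>
      (\<forall>t\<ge>0. (x has_vector_derivative v t) (at t within {0..})) \<longrightarrow>
      (\<forall>t\<ge>0. (v has_vector_derivative (- (aT (x t) t) *\<^sub>R v t + \<epsilon> t)) (at t within {0..})) \<longrightarrow>
      (\<forall>y t. t \<ge> 0 \<longrightarrow> aT y t \<ge> H / (1 + (norm y)\<^sup>2) powr \<beta>) \<longrightarrow>
      (\<forall>t\<ge>0. norm (\<epsilon> t) \<le> a * exp (- b * (t + T) powr \<eta>)) \<longrightarrow>
      (\<forall>t\<ge>0. norm (v t) \<le> D0) \<longrightarrow>
      norm (x 0) \<le> R0 + D0 * T \<longrightarrow>
      norm (v T) \<le> A * exp (- B * T powr (min (1 - 2*\<beta>) \<eta>m)))"
proof -
  define K where "K = (1+R0+2*D0)\<^sup>2"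
  define c where "c = H / K powr \<beta>"
  define C1 where "C1 = exp ((-1 - ln (b*\<eta>/2)) / \<eta>)"
  define B where "B = min c (b/4)"
  define S where "S = sqrt (D0\<^sup>2 + 2*D0*a*C1)"
  define A where "A = S * exp B"
  define \<gamma> where "\<gamma> = min (1 - 2*\<beta>) \<eta>m"
  have Kpos: "K > 0" using assms by (simp add: K_def add_pos_nonneg)
  have cpos: "c > 0" using Kpos assms by (simp add: c_def)
  have C1pos: "C1 > 0" by (simp add: C1_def)
  have Bpos: "B > 0" using cpos assms by (simp add: B_def)
  have Spos: "S \<ge> D0" using assms C1pos unfolding S_def
    by (intro real_le_rsqrt) (auto intro!: mult_nonneg_nonneg)
  have Apos: "A > 0" using Spos assms by (simp add: A_def)
  have gpos: "\<gamma> > 0" using assms by (auto simp: \<gamma>_def \<eta>m_def)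
  have g1: "\<gamma> \<le> 1 - 2*\<beta>" by (simp add: \<gamma>_def)
  have g2: "\<gamma> \<le> \<eta>" using assms by (auto simp: \<gamma>_def \<eta>m_def)
  show ?thesis
  proof (rule exI[of _ A], rule exI[of _ B], intro conjI Apos Bpos allI impI)
    fix T :: real and v x :: "real \<Rightarrow> real^3" and aT :: "real^3 \<Rightarrow> real \<Rightarrow> real" and ep :: "real \<Rightarrow> real^3"
    assume T: "T > 0"
      and dx: "\<forall>t\<ge>0. (x has_vector_derivative v t) (at t within {0..})"
      and dv: "\<forall>t\<ge>0. (v has_vector_derivative (- (aT (x t) t) *\<^sub>R v t + ep t)) (at t within {0..})"
      and aTb: "\<forall>y t. t \<ge> 0 \<longrightarrow> aT y t \<ge> H / (1 + (norm y)\<^sup>2) powr \<beta>"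
      and epb: "\<forall>t\<ge>0. norm (ep t) \<le> a * exp (- b * (t + T) powr \<eta>)"
      and vb: "\<forall>t\<ge>0. norm (v t) \<le> D0"
      and x0: "norm (x 0) \<le> R0 + D0 * T"
    have "norm (v T) \<le> A * exp (- B * T powr \<gamma>)"
    proof (cases "T \<ge> 1")
      case False
      have "T powr \<gamma> \<le> 1" using False T gpos by (intro powr_le1) auto
      hence "B * T powr \<gamma> \<le> B * 1" using Bpos by (intro mult_left_mono) auto
      hence "exp 0 \<le> exp (B - B * T powr \<gamma>)" by simp
      hence "1 \<le> exp B * exp (- B * T powr \<gamma>)" by (simp add: exp_add[symmetric])
      hence "S * 1 \<le> S * (exp B * exp (- B * T powr \<gamma>))" using Spos assms by (intro mult_left_mono) auto
      moreover have "norm (v T) \<le> D0" using vb T by simp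
      ultimately show ?thesis using Spos by (simp add: A_def mult.assoc)
    next
      case True
      define lam where "lam = H / (1 + (R0 + 2*D0*T)\<^sup>2) powr \<beta>"
      have lampos: "lam \<ge> 0" using assms by (simp add: lam_def)
      have alb: "\<forall>t\<in>{0..T}. aT (x t) t \<ge> lam"
      proof
        fix t assume t: "t \<in> {0..T}"
        have "norm (x t) \<le> norm (x 0) + D0 * t" using xbound[OF dx vb] t by simp
        also have "\<dots> \<le> R0 + 2*D0*T" proof -
          have "D0 * t \<le> D0 * T" using t assms by (intro mult_left_mono) auto
          thus ?thesis using x0 by linarith
        qed
        finally have nx: "norm (x t) \<le> R0 + 2*D0*T" .
        have "(norm (x t))\<^sup>2 \<le> (R0 + 2*D0*T)\<^sup>2" using nx by (intro power_mono) auto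
        hence "(1 + (norm (x t))\<^sup>2) powr \<beta> \<le> (1 + (R0 + 2*D0*T)\<^sup>2) powr \<beta>"
          using assms by (intro powr_mono2) auto
        moreover have "(1 + (norm (x t))\<^sup>2) > 0" by (simp add: add_pos_nonneg)
        ultimately have "lam \<le> H / (1 + (norm (x t))\<^sup>2) powr \<beta>"
          unfolding lam_def using assms by (intro divide_left_mono) (auto intro!: mult_pos_pos)
        also have "\<dots> \<le> aT (x t) t" using aTb t by simp
        finally show "aT (x t) t \<ge> lam" .
      qed
      have epb2: "\<forall>t\<in>{0..T}. norm (ep t) \<le> a * exp (- b * T powr \<eta>)"
      proof
        fix t assume t: "t \<in> {0..T}"
        have "T powr \<eta> \<le> (t + T) powr \<eta>" using t T assms by (intro powr_mono2) auto
        hence "exp (- b * (t + T) powr \<eta>) \<le> exp (- b * T powr \<eta>)" using assms by simp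
        thus "norm (ep t) \<le> a * exp (- b * T powr \<eta>)"
        proof -
          have "norm (ep t) \<le> a * exp (- b * (t + T) powr \<eta>)" using epb t by simp
          also have "\<dots> \<le> a * exp (- b * T powr \<eta>)"
            using \<open>exp (- b * (t + T) powr \<eta>) \<le> exp (- b * T powr \<eta>)\<close> assms by (intro mult_left_mono) auto
          finally show ?thesis .
        qed
      qed
      have main: "(norm (v T))\<^sup>2 \<le> D0\<^sup>2 * exp(-2*lam*T) + 2*D0*(a * exp (- b * T powr \<eta>))*T"
        by (rule key[OF T lampos dv alb epb2 vb])
      have lT: "lam * T \<ge> c * T powr \<gamma>"
      proof -
        have "T powr \<gamma> \<le> T powr (1 - 2*\<beta>)" using True g1 by (intro powr_mono) auto
        hence "c * T powr \<gamma> \<le> c * T powr (1 - 2*\<beta>)" using cpos by simp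
        also have "\<dots> \<le> lam * T" unfolding c_def K_def lam_def
          using lamlemma[of H \<beta> R0 D0 T] assms True by simp
        finally show ?thesis .
      qed
      have e1: "exp(-2*lam*T) \<le> exp (-2*B * T powr \<gamma>)"
      proof -
        have "B * T powr \<gamma> \<le> c * T powr \<gamma>" by (intro mult_right_mono) (auto simp: B_def)
        thus ?thesis using lT by simp
      qed
      have "T * exp (- b * T powr \<eta>) \<le> C1 * exp ((b/2) * T powr \<eta>) * exp (- b * T powr \<eta>)"
        using loglemma[of b \<eta> T] assms T unfolding C1_def
        by (intro mult_right_mono) (auto simp: exp_add mult.commute)
      also have "\<dots> = C1 * exp (- (b/2) * T powr \<eta>)"
        by (simp add: mult.assoc exp_add[symmetric])
      also have "\<dots> \<le> C1 * exp (-2*B * T powr \<gamma>)"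
      proof -
        have "T powr \<gamma> \<le> T powr \<eta>" using True g2 by (intro powr_mono) auto
        moreover have "2*B \<le> b/2" by (simp add: B_def)
        ultimately have "2*B * T powr \<gamma> \<le> (b/2) * T powr \<eta>"
          using Bpos by (intro mult_mono) auto
        thus ?thesis using C1pos by simp
      qed
      finally have e2: "T * exp (- b * T powr \<eta>) \<le> C1 * exp (-2*B * T powr \<gamma>)" .
      have "(norm (v T))\<^sup>2 \<le> D0\<^sup>2 * exp (-2*B * T powr \<gamma>) + 2*D0*a * (C1 * exp (-2*B * T powr \<gamma>))"
      proof -
        have "D0\<^sup>2 * exp(-2*lam*T) \<le> D0\<^sup>2 * exp (-2*B * T powr \<gamma>)"
          using e1 by (intro mult_left_mono) auto
        moreover have "2*D0*a * (T * exp (- b * T powr \<eta>)) \<le> 2*D0*a * (C1 * exp (-2*B * T powr \<gamma>))"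
          using e2 assms by (intro mult_left_mono) auto
        ultimately show ?thesis using main by (simp add: algebra_simps)
      qed
      also have "\<dots> = (S * exp (- B * T powr \<gamma>))\<^sup>2"
      proof -
        have "S\<^sup>2 = D0\<^sup>2 + 2*D0*a*C1"
          unfolding S_def using assms C1pos by (intro real_sqrt_pow2) (auto intro!: add_nonneg_nonneg mult_nonneg_nonneg)
        moreover have "(exp (- B * T powr \<gamma>))\<^sup>2 = exp (-2*B * T powr \<gamma>)"
          unfolding power2_eq_square exp_add[symmetric] by simp
        ultimately show ?thesis unfolding power_mult_distrib by (simp add: distrib_right mult.assoc)
      qed
      finally have sq: "(norm (v T))\<^sup>2 \<le> (S * exp (- B * T powr \<gamma>))\<^sup>2" .
      have "0 \<le> S" using Spos assms by linarith
      hence "0 \<le> S * exp (- B * T powr \<gamma>)" by simp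
      hence "norm (v T) \<le> S * exp (- B * T powr \<gamma>)" by (rule power2_le_imp_le[OF sq])
      also have "\<dots> \<le> A * exp (- B * T powr \<gamma>)"
      proof -
        have "S * 1 \<le> S * exp B" using Spos assms Bpos by (intro mult_left_mono) auto
        hence "S \<le> A" by (simp add: A_def)
        thus ?thesis by (intro mult_right_mono) auto
      qed
      finally show ?thesis .
    qed
    thus "norm (v T) \<le> A * exp (- B * T powr (min (1 - 2*\<beta>) \<eta>m))" unfolding \<gamma>_def .
  qed
qed

end
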